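(* Let $\nu$ be a Krull valuation on $\mathbb{K}[x]$, $\mu$ an extension of $\nu$ to $\overline{\mathbb{K}}[x]$, $f\in\mathbb{K}[x]$ non-constant and $a\in\overline{\mathbb{K}}$ an optimizing root of $f$. Then $\nu(f)\in\mu\overline{\mathbb{K}}$ if and only if $\delta(f)\in\mu\overline{\mathbb{K}}$.
   Context: $\overline{\mathbb{K}}$ is an algebraic closure of $\mathbb{K}$, $\mu\overline{\mathbb{K}}$ the value group of $\mu$ restricted to $\overline{\mathbb{K}}$. For non-constant $f$, $\delta(f)=\max\{\mu(x-c):c\in\overline{\mathbb{K}},f(c)=0\}$, and a root $c$ with $\mu(x-c)=\delta(f)$ is an optimizing root. *)

theory Defs
  imports "HOL-Computational_Algebra.Polynomial"
begin

text \<open>Krull valuation on a polynomial ring with values in an ordered abelian group: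
  the value of the zero polynomial is infinity, which is encoded by leaving v 0
  unconstrained and only imposing the axioms on nonzero polynomials (trivial support).\<close>
definition krull_valuation :: "('a::field poly \<Rightarrow> 'g::linordered_ab_group_add) \<Rightarrow> bool" where
  "krull_valuation v \<longleftrightarrow>
     (\<forall>f g. f \<noteq> 0 \<longrightarrow> g \<noteq> 0 \<longrightarrow> v (f * g) = v f + v g) \<and>
     (\<forall>f g. f \<noteq> 0 \<longrightarrow> g \<noteq> 0 \<longrightarrow> f + g \<noteq> 0 \<longrightarrow> min (v f) (v g) \<le> v (f + g))"

definition is_alg_closure_emb :: "('k::field \<Rightarrow> 'kb::alg_closed_field) \<Rightarrow> bool" where
  "is_alg_closure_emb \<iota> \<longleftrightarrow>
     (\<forall>a b. \<iota> (a + b) = \<iota> a + \<iota> b) \<and> (\<forall>a b. \<iota> (a * b) = \<iota> a * \<iota> b) \<and> \<iota> 1 = 1 \<and>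
     (\<forall>c. \<exists>p. p \<noteq> 0 \<and> poly (map_poly \<iota> p) c = 0)"

definition extends_val ::
  "('k::field \<Rightarrow> 'kb::field) \<Rightarrow> ('kb poly \<Rightarrow> 'g) \<Rightarrow> ('k poly \<Rightarrow> 'g) \<Rightarrow> bool" where
  "extends_val \<iota> \<mu> \<nu> \<longleftrightarrow> (\<forall>f. f \<noteq> 0 \<longrightarrow> \<mu> (map_poly \<iota> f) = \<nu> f)"

definition value_group :: "('kb::field poly \<Rightarrow> 'g) \<Rightarrow> 'g set" where
  "value_group \<mu> = {\<mu> [:c:] | c. c \<noteq> 0}"

definition delta ::
  "('k::field \<Rightarrow> 'kb::field) \<Rightarrow> ('kb poly \<Rightarrow> 'g::linorder) \<Rightarrow> 'k poly \<Rightarrow> 'g" where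
  "delta \<iota> \<mu> f = Max {\<mu> [:-c, 1:] | c. poly (map_poly \<iota> f) c = 0}"

definition optimizing_root ::
  "('k::field \<Rightarrow> 'kb::field) \<Rightarrow> ('kb poly \<Rightarrow> 'g::linorder) \<Rightarrow> 'k poly \<Rightarrow> 'kb \<Rightarrow> bool" where
  "optimizing_root \<iota> \<mu> f a \<longleftrightarrow> poly (map_poly \<iota> f) a = 0 \<and> \<mu> [:-a, 1:] = delta \<iota> \<mu> f"

end

theory Submission
  imports Defs
begin

lemma kv_mult: "krull_valuation v \<Longrightarrow> f \<noteq> 0 \<Longrightarrow> g \<noteq> 0 \<Longrightarrow> v (f * g) = v f + v g"
  unfolding krull_valuation_def by blast

lemma kv_add: "krull_valuation v \<Longrightarrow> f \<noteq> 0 \<Longrightarrow> g \<noteq> 0 \<Longrightarrow> f + g \<noteq> 0 \<Longrightarrow> min (v f) (v g) \<le> v (f + g)"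
  unfolding krull_valuation_def by blast

lemma kv_one:
  fixes v :: "'a::field poly \<Rightarrow> 'g::linordered_ab_group_add"
  assumes "krull_valuation v" shows "v 1 = 0"
proof -
  have "v (1*1) = v 1 + v 1" by (rule kv_mult[OF assms]) auto
  thus ?thesis by simp
qed

lemma double_zero: "(x::'g::linordered_ab_group_add) + x = 0 \<Longrightarrow> x = 0"
  by (metis add_neg_neg add_pos_pos less_irrefl linorder_neqE)

lemma kv_neg:
  fixes v :: "'a::field poly \<Rightarrow> 'g::linordered_ab_group_add"
  assumes "krull_valuation v" "p \<noteq> 0" shows "v (-p) = v p"
proof -
  have m1: "v [:-1:] = 0"
  proof -
    have "v ([:-1:] * [:-1:]) = v [:-1:] + v [:-1:]" by (rule kv_mult[OF assms(1)]) auto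
    moreover have "[:-1:] * [:-1:] = (1::'a poly)" by (simp add: one_pCons)
    moreover have "v [:1:] = 0" using kv_one[OF assms(1)] by (simp add: one_pCons)
    ultimately have "v [:-1:] + v [:-1:] = 0" by (simp add: one_pCons)
    thus ?thesis by (rule double_zero)
  qed
  have "v ([:-1:] * p) = v [:-1:] + v p" by (rule kv_mult[OF assms(1)]) (use assms in auto)
  hence "v (-p) = v [:-1:] + v p" by simp
  thus ?thesis using m1 by simp
qed

lemma vg_add:
  fixes v :: "'a::field poly \<Rightarrow> 'g::linordered_ab_group_add"
  assumes "krull_valuation v" "x \<in> value_group v" "y \<in> value_group v"
  shows "x + y \<in> value_group v"
proof -
  obtain c d where cd: "x = v [:c:]" "c \<noteq> 0" "y = v [:d:]" "d \<noteq> 0"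
    using assms unfolding value_group_def by blast
  have "v ([:c:] * [:d:]) = v [:c:] + v [:d:]" by (rule kv_mult[OF assms(1)]) (use cd in simp_all)
  moreover have "[:c:] * [:d:] = [:c*d:]" by (rule mult_pCons_left[THEN trans]) simp
  ultimately have "x + y = v [:c*d:]" using cd by metis
  moreover have "c * d \<noteq> 0" using cd by simp
  ultimately show ?thesis unfolding value_group_def by blast
qed

lemma vg_neg:
  fixes v :: "'a::field poly \<Rightarrow> 'g::linordered_ab_group_add"
  assumes "krull_valuation v" "x \<in> value_group v"
  shows "- x \<in> value_group v"
proof -
  obtain c where c: "x = v [:c:]" "c \<noteq> 0"
    using assms unfolding value_group_def by blast
  have "v ([:c:] * [:inverse c:]) = v [:c:] + v [:inverse c:]" by (rule kv_mult[OF assms(1)]) (use c in simp_all)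
  moreover have "[:c:] * [:inverse c:] = 1" using c by (simp add: one_pCons)
  ultimately have "x + v [:inverse c:] = 0" using kv_one[OF assms(1)] c by metis
  hence "- x = v [:inverse c:]" by (simp add: neg_eq_iff_add_eq_0)
  moreover have "inverse c \<noteq> 0" using c by simp
  ultimately show ?thesis unfolding value_group_def by blast
qed

lemma vg_nsm:
  fixes v :: "'a::field poly \<Rightarrow> 'g::linordered_ab_group_add"
    and k :: nat
  assumes "krull_valuation v" "x \<in> value_group v"
  shows "k > 0 \<Longrightarrow> (\<Sum>i<k. x) \<in> value_group v"
proof (induction k)
  case 0 then show ?case by simp
next
  case (Suc k)
  show ?case
  proof (cases "k = 0")
    case True then show ?thesis using assms by simp
  next
    case False
    then show ?thesis using Suc vg_add[OF assms(1) _ assms(2)] by simp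
  qed
qed

lemma const_pow:
  fixes v :: "'a::field poly \<Rightarrow> 'g::linordered_ab_group_add"
  assumes "krull_valuation v" "b \<noteq> 0"
  shows "v [:b ^ k:] = v 1 + (\<Sum>i<k. v [:b:])"
proof (induction k)
  case 0 then show ?case by (simp add: one_pCons)
next
  case (Suc k)
  have "v ([:b^k:] * [:b:]) = v [:b^k:] + v [:b:]" by (rule kv_mult[OF assms(1)]) (use assms in auto)
  hence "v [:b ^ Suc k:] = v [:b^k:] + v [:b:]" by (simp add: mult.commute)
  thus ?case using Suc by (simp add: add.assoc)
qed

lemma nsm_cancel:
  fixes x y :: "'g::linordered_ab_group_add" and k :: nat
  assumes "k > 0" "(\<Sum>i<k. x) = (\<Sum>i<k. y)"
  shows "x = y"
proof (rule ccontr)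
  assume "x \<noteq> y"
  then consider "x < y" | "y < x" by fastforce
  then show False
  proof cases
    case 1
    have "(\<Sum>i<k. x) < (\<Sum>i<k. y)" by (rule sum_strict_mono[of "{..<k}"]) (use assms 1 in auto)
    thus False using assms by simp
  next
    case 2
    have "(\<Sum>i<k. y) < (\<Sum>i<k. x)" by (rule sum_strict_mono[of "{..<k}"]) (use assms 2 in auto)
    thus False using assms by simp
  qed
qed

lemma key:
  fixes \<mu> :: "'kb::alg_closed_field poly \<Rightarrow> 'g::linordered_ab_group_add"
  assumes kv: "krull_valuation \<mu>"
  shows "p \<noteq> 0 \<Longrightarrow> (\<forall>c. poly p c = 0 \<longrightarrow> \<mu> [:-c,1:] \<le> \<mu> [:-a,1:]) \<Longrightarrow>
    \<exists>\<gamma>\<in>value_group \<mu>. \<exists>k::nat. \<mu> p = \<gamma> + (\<Sum>i<k. \<mu> [:-a,1:]) \<and> (poly p a = 0 \<longrightarrow> k > 0)"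
proof (induction "degree p" arbitrary: p rule: less_induct)
  case less
  define \<delta> where "\<delta> = \<mu> [:-a,1:]"
  show ?case
  proof (cases "degree p = 0")
    case True
    then obtain c where p: "p = [:c:]" by (metis degree_eq_zeroE)
    with less have "c \<noteq> 0" by simp
    hence "\<mu> p \<in> value_group \<mu>" unfolding value_group_def p by auto
    moreover have "poly p a \<noteq> 0" using p \<open>c \<noteq> 0\<close> by simp
    moreover have "\<mu> p = \<mu> p + (\<Sum>i<(0::nat). \<mu> [:-a,1:]) \<and> (poly p a = 0 \<longrightarrow> (0::nat) < 0)"
      using \<open>poly p a \<noteq> 0\<close> by simp
    ultimately show ?thesis by blast
  next
    case False
    then obtain c where c: "poly p c = 0" using alg_closed_imp_poly_has_root by blast
    then obtain q where pq: "p = [:-c,1:] * q" by (meson dvdE poly_eq_0_iff_dvd)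
    have q0: "q \<noteq> 0" using less pq by auto
    have "degree p = degree [:-c,1:] + degree q" unfolding pq by (rule degree_mult_eq) (use q0 in auto)
    hence dq: "degree q < degree p" by simp
    have roots: "\<forall>d. poly q d = 0 \<longrightarrow> \<mu> [:-d,1:] \<le> \<mu> [:-a,1:]"
      using less(3) pq by auto
    obtain \<gamma> and k :: nat where g: "\<gamma> \<in> value_group \<mu>" "\<mu> q = \<gamma> + (\<Sum>i<k. \<mu> [:-a,1:])"
      "poly q a = 0 \<longrightarrow> k > 0"
      using less(1)[OF dq q0 roots] by blast
    have mp: "\<mu> p = \<mu> [:-c,1:] + \<mu> q" using pq kv_mult[OF kv, of "[:-c,1:]" q] q0 by simp
    have le: "\<mu> [:-c,1:] \<le> \<delta>" using less(3) c \<delta>_def by auto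
    show ?thesis
    proof (cases "\<mu> [:-c,1:] = \<delta>")
      case True
      have "\<mu> p = \<gamma> + (\<Sum>i<Suc k. \<mu> [:-a,1:])"
        using mp g True \<delta>_def by (simp add: algebra_simps)
      thus ?thesis using g by blast
    next
      case False
      hence lt: "\<mu> [:-c,1:] < \<delta>" using le by simp
      hence ac: "a \<noteq> c" using \<delta>_def by auto
      have e1: "[:-a,1:] + [:a-c:] = [:-c,1:]" by simp
      have "min \<delta> (\<mu> [:a-c:]) \<le> \<mu> [:-c,1:]"
        using kv_add[OF kv, of "[:-a,1:]" "[:a-c:]"] e1 ac \<delta>_def by auto
      hence i1: "\<mu> [:a-c:] \<le> \<mu> [:-c,1:]" using lt by (simp add: min_def split: if_splits)
      have e2: "[:-c,1:] + (- [:-a,1:]) = [:a-c:]" by simp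
      have "min (\<mu> [:-c,1:]) (\<mu> (- [:-a,1:])) \<le> \<mu> [:a-c:]"
        using kv_add[OF kv, of "[:-c,1:]" "- [:-a,1:]"] e2 ac by auto
      moreover have "\<mu> (- [:-a,1:]) = \<delta>" unfolding \<delta>_def by (rule kv_neg[OF kv]) simp
      ultimately have i2: "\<mu> [:-c,1:] \<le> \<mu> [:a-c:]" using lt by (simp add: min_def split: if_splits)
      have eq: "\<mu> [:-c,1:] = \<mu> [:a-c:]" using i1 i2 by simp
      have "\<mu> [:a-c:] \<in> value_group \<mu>" using ac unfolding value_group_def by auto
      hence inG: "\<mu> [:a-c:] + \<gamma> \<in> value_group \<mu>" using vg_add[OF kv _ g(1)] by blast
      have "\<mu> p = (\<mu> [:a-c:] + \<gamma>) + (\<Sum>i<k. \<mu> [:-a,1:])"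
        using mp g eq by (simp add: add.assoc)
      moreover have "poly p a = 0 \<longrightarrow> k > 0" using pq ac g(3) by auto
      ultimately show ?thesis using inG by blast
    qed
  qed
qed

theorem lemma3p5:
  fixes \<iota> :: "'k::field \<Rightarrow> 'kb::alg_closed_field"
    and \<nu> :: "'k poly \<Rightarrow> 'g::linordered_ab_group_add"
    and \<mu> :: "'kb poly \<Rightarrow> 'g"
    and f :: "'k poly" and a :: 'kb
  assumes "is_alg_closure_emb \<iota>"
    and "krull_valuation \<nu>"
    and "krull_valuation \<mu>"
    and "extends_val \<iota> \<mu> \<nu>"
    and "degree f > 0"
    and "optimizing_root \<iota> \<mu> f a"
  shows "\<nu> f \<in> value_group \<mu> \<longleftrightarrow> delta \<iota> \<mu> f \<in> value_group \<mu>"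
proof -
  note kv = assms(3)
  define F where "F = map_poly \<iota> f"
  have hadd: "\<And>x y. \<iota> (x + y) = \<iota> x + \<iota> y" and hmul: "\<And>x y. \<iota> (x * y) = \<iota> x * \<iota> y"
    and h1: "\<iota> 1 = 1" using assms(1) unfolding is_alg_closure_emb_def by auto
  have "\<iota> 0 + \<iota> 0 = \<iota> 0 + 0" using hadd[of 0 0] by simp
  hence h0: "\<iota> 0 = 0" by (rule add_left_imp_eq)
  have inj0: "\<iota> x = 0 \<Longrightarrow> x = 0" for x
  proof (rule ccontr)
    assume "\<iota> x = 0" "x \<noteq> 0"
    hence "\<iota> 1 = 0" using hmul[of x "inverse x"] by simp
    thus False using h1 by simp
  qed
  have f0: "f \<noteq> 0" using assms(5) by auto
  have "coeff F (degree f) = \<iota> (lead_coeff f)" unfolding F_def using h0 by (simp add: coeff_map_poly)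
  moreover have "\<iota> (lead_coeff f) \<noteq> 0" using inj0 f0 leading_coeff_0_iff by metis
  ultimately have F0: "F \<noteq> 0" by auto
  have muF: "\<mu> F = \<nu> f" using assms(4) f0 unfolding extends_val_def F_def by simp
  have del: "delta \<iota> \<mu> f = \<mu> [:-a,1:]" and aroot: "poly F a = 0"
    using assms(6) unfolding optimizing_root_def F_def by auto
  have fin: "finite {\<mu> [:-c, 1:] | c. poly F c = 0}"
  proof -
    have "{\<mu> [:-c, 1:] | c. poly F c = 0} = (\<lambda>c. \<mu> [:-c, 1:]) ` {c. poly F c = 0}" by auto
    thus ?thesis using poly_roots_finite[OF F0] by simp
  qed
  have bound: "\<forall>c. poly F c = 0 \<longrightarrow> \<mu> [:-c,1:] \<le> \<mu> [:-a,1:]"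
  proof (intro allI impI)
    fix c assume "poly F c = 0"
    hence "\<mu> [:-c,1:] \<le> Max {\<mu> [:-c, 1:] | c. poly F c = 0}" using fin by (intro Max_ge) auto
    thus "\<mu> [:-c,1:] \<le> \<mu> [:-a,1:]" using del unfolding delta_def F_def by simp
  qed
  obtain \<gamma> and k :: nat where g: "\<gamma> \<in> value_group \<mu>" "\<mu> F = \<gamma> + (\<Sum>i<k. \<mu> [:-a,1:])" "k > 0"
    using key[OF kv F0 bound] aroot by blast
  show ?thesis
  proof
    assume "\<nu> f \<in> value_group \<mu>"
    hence "\<nu> f + - \<gamma> \<in> value_group \<mu>" using vg_add[OF kv] vg_neg[OF kv g(1)] by blast
    moreover have "\<nu> f + - \<gamma> = (\<Sum>i<k. \<mu> [:-a,1:])" using muF g(2) by (simp add: algebra_simps)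
    ultimately obtain e where e: "(\<Sum>i<k. \<mu> [:-a,1:]) = \<mu> [:e:]" "e \<noteq> 0"
      unfolding value_group_def by auto
    obtain b where b: "b ^ k = e" using nth_root_exists[OF g(3)] by blast
    hence b0: "b \<noteq> 0" using e(2) g(3) by auto
    have "\<mu> [:e:] = (\<Sum>i<k. \<mu> [:b:])" using const_pow[OF kv b0, of k] b kv_one[OF kv] by simp
    hence "\<mu> [:-a,1:] = \<mu> [:b:]" using nsm_cancel[OF g(3)] e(1) by simp
    thus "delta \<iota> \<mu> f \<in> value_group \<mu>" using del b0 unfolding value_group_def by auto
  next
    assume "delta \<iota> \<mu> f \<in> value_group \<mu>"
    hence "(\<Sum>i<k. \<mu> [:-a,1:]) \<in> value_group \<mu>" using vg_nsm[OF kv _ g(3)] del by simp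
    thus "\<nu> f \<in> value_group \<mu>" using vg_add[OF kv g(1)] g(2) muF by simp
  qed
qed

end
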